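(* Let $(X,|\cdot|_X)$ be a Banach space, $T>0$, and let $A\colon D(A)\subset X\to X$ be the infinitesimal generator of a $C_0$-semigroup $\{S(t): t\ge0\}$ on $X$. Let $C_A\ge0$ be a constant with $|S(t)|_{\mathcal L(X)}\le C_A$ for all $t\in[0,2T]$. Let $a,b,k>0$ and let $F,G\colon X^2\to X$ be continuous. Assume: (i) there are nonnegative constants $a_{11},a_{12},a_{21},a_{22}$ such that for all $x,\bar x,y,\bar y\in X$, $|F(x,y)-F(\bar x,\bar y)|_X\le a_{11}|x-\bar x|_X+a_{12}|y-\bar y|_X$ and $|G(x,y)-G(\bar x,\bar y)|_X\le a_{21}|x-\bar x|_X+a_{22}|y-\bar y|_X$; (ii) there exists $\theta\ge0$ such that the matrix \[ M(\theta):=C_A\begin{bmatrix}\frac1a+\left(1+\frac1a\right)Ta_{11}+\frac kaTa_{21} & \left(\left(1+\frac1a\right)a_{12}+\frac kaa_{22}\right)\frac{e^{\theta T}-1}{\theta}\\[3pt] Ta_{21} & a_{22}\frac{1-e^{-\theta T}}{\theta}\end{bmatrix} \] is convergent to zero. Then for every $\beta\in X$ there exists a unique pair $(x,y)\in C([0,T];X)^2$ with $y(0)=\beta$ such that for all $t\in[0,T]$ \[ x(t)=S(t)x(0)+\int_0^tS(t-s)F(x(s),y(s))\,ds,\qquad y(t)=S(t)y(0)+\int_0^tS(t-s)G(x(s),y(s))\,ds, \] and $x(T)-a\,x(0)=k\big(y(T)-b\,y(0)\big)$.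
   Context: $\mathcal L(X)$ is the space of bounded linear operators on $X$ with the operator norm. For $\theta=0$ the quotients $\frac{e^{\theta T}-1}{\theta}$ and $\frac{1-e^{-\theta T}}{\theta}$ are understood as their limit value $T$. A square matrix with nonnegative entries is convergent to zero if its powers tend to the zero matrix (equivalently, its spectral radius is $<1$). *)

theory Defs
  imports "HOL-Analysis.Analysis"
begin

text \<open>C_0-semigroup of bounded linear operators on a Banach space
  (values of S at negative times are irrelevant).\<close>
definition C0_semigroup :: "(real \<Rightarrow> ('a::banach \<Rightarrow>\<^sub>L 'a)) \<Rightarrow> bool" where
  "C0_semigroup S \<longleftrightarrow>
     S 0 = id_blinfun \<and>
     (\<forall>t s. 0 \<le> t \<longrightarrow> 0 \<le> s \<longrightarrow> S (t + s) = S t o\<^sub>L S s) \<and>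
     (\<forall>v. ((\<lambda>t. blinfun_apply (S t) v) \<longlongrightarrow> v) (at_right 0))"

definition is_generator :: "('a::banach \<Rightarrow> 'a) \<Rightarrow> 'a set \<Rightarrow> (real \<Rightarrow> ('a \<Rightarrow>\<^sub>L 'a)) \<Rightarrow> bool" where
  "is_generator A D S \<longleftrightarrow>
     C0_semigroup S \<and>
     D = {v. \<exists>w. ((\<lambda>h. (1 / h) *\<^sub>R (blinfun_apply (S h) v - v)) \<longlongrightarrow> w) (at_right 0)} \<and>
     (\<forall>v\<in>D. ((\<lambda>h. (1 / h) *\<^sub>R (blinfun_apply (S h) v - v)) \<longlongrightarrow> A v) (at_right 0))"

definition qplus :: "real \<Rightarrow> real \<Rightarrow> real" where
  "qplus \<theta> T = (if \<theta> = 0 then T else (exp (\<theta> * T) - 1) / \<theta>)"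

definition qminus :: "real \<Rightarrow> real \<Rightarrow> real" where
  "qminus \<theta> T = (if \<theta> = 0 then T else (1 - exp (- \<theta> * T)) / \<theta>)"

primrec mpow :: "real^'n^'n \<Rightarrow> nat \<Rightarrow> real^'n^'n" where
  "mpow M 0 = mat 1"
| "mpow M (Suc n) = M ** mpow M n"

definition convergent_to_zero :: "real^'n^'n \<Rightarrow> bool" where
  "convergent_to_zero M \<longleftrightarrow> (\<lambda>n. mpow M n) \<longlonglongrightarrow> 0"

definition Mtheta :: "real \<Rightarrow> real \<Rightarrow> real \<Rightarrow> real \<Rightarrow> real \<Rightarrow> real \<Rightarrow> real \<Rightarrow> real \<Rightarrow> real \<Rightarrow> real^2^2" where
  "Mtheta CA T a k a11 a12 a21 a22 \<theta> =
     CA *\<^sub>R (vector [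
        vector [1 / a + (1 + 1 / a) * T * a11 + (k / a) * T * a21,
                ((1 + 1 / a) * a12 + (k / a) * a22) * qplus \<theta> T],
        vector [T * a21, a22 * qminus \<theta> T]] :: real^2^2)"

end

theory Submission
  imports Defs
begin


lemma exp_int:
  fixes \<theta> t :: real assumes t: "0 \<le> t"
  shows "((\<lambda>s. exp (\<theta> * s)) has_integral qplus \<theta> t) {0..t}"
proof (cases "\<theta> = 0")
  case True
  then show ?thesis using has_integral_const_real[of "1::real" 0 t] t by (simp add: qplus_def)
next
  case False
  have "((\<lambda>s. exp (\<theta> * s)) has_integral (exp (\<theta> * t) / \<theta> - exp (\<theta> * 0) / \<theta>)) {0..t}"
  proof (rule fundamental_theorem_of_calculus[OF t])
    fix x :: real
    have "((\<lambda>s. exp (\<theta> * s) / \<theta>) has_real_derivative exp (\<theta> * x)) (at x)"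
      using False by (auto intro!: derivative_eq_intros)
    then show "((\<lambda>s. exp (\<theta> * s) / \<theta>) has_vector_derivative exp (\<theta> * x)) (at x within {0..t})"
      by (simp add: has_real_derivative_iff_has_vector_derivative has_vector_derivative_at_within)
  qed
  then show ?thesis using False by (simp add: qplus_def diff_divide_distrib)
qed

lemma pos_frac: "0 < (e::real) \<Longrightarrow> 0 \<le> x \<Longrightarrow> 0 < e / (2*(x+1))"
  by (simp add: add_nonneg_pos)

lemma frac_le: assumes "0 \<le> (x::real)" "0 \<le> e" shows "x * (e / (2*(x+1))) \<le> e/2"
proof -
  have "x * (e / (2*(x+1))) = (x/(x+1)) * (e/2)" by (simp add: field_simps)
  also have "\<dots> \<le> 1 * (e/2)" using assms by (intro mult_right_mono) auto
  finally show ?thesis by simp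
qed

lemma int_bound_const:
  fixes f :: "real \<Rightarrow> 'a::banach"
  assumes "f integrable_on {a..b}" "a \<le> b" "0 \<le> B" "\<And>x. x \<in> {a..b} \<Longrightarrow> norm (f x) \<le> B"
  shows "norm (integral {a..b} f) \<le> B * (b - a)"
  using has_integral_bound[of B f "integral {a..b} f" a b] assms
  by (simp add: content_real integrable_integral)

locale sg =
  fixes S :: "real \<Rightarrow> ('a::banach \<Rightarrow>\<^sub>L 'a)" and T CA :: real
  assumes T_pos: "T > 0" and CA_nonneg: "CA \<ge> 0"
    and CA_bound: "\<forall>t\<in>{0..2*T}. norm (S t) \<le> CA"
    and C0: "C0_semigroup S"
begin

lemma Sbound: "t \<in> {0..2*T} \<Longrightarrow> norm (S t v) \<le> CA * norm v"
  by (meson CA_bound mult_right_mono norm_blinfun norm_ge_zero order_trans)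

lemma Sadd: "0 \<le> t \<Longrightarrow> 0 \<le> s \<Longrightarrow> S (t + s) v = S t (S s v)"
  using C0 unfolding C0_semigroup_def by auto

lemma S0[simp]: "S 0 v = v"
  using C0 unfolding C0_semigroup_def by auto

lemma Sright: "((\<lambda>t. S t v) \<longlongrightarrow> v) (at_right 0)"
  using C0 unfolding C0_semigroup_def by auto

lemma strong_unif:
  assumes "e > 0"
  shows "\<exists>d>0. \<forall>t\<in>{0..2*T}. \<forall>t'\<in>{0..2*T}. \<bar>t - t'\<bar> < d \<longrightarrow> norm (S t v - S t' v) \<le> e"
proof -
  have e1: "e / (CA + 1) > 0" using assms CA_nonneg by simp
  have "eventually (\<lambda>h. dist (S h v) v < e / (CA + 1)) (at_right 0)"
    using tendsto_iff[THEN iffD1, OF Sright[of v], rule_format, OF e1] .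
  then obtain d where d: "d > 0" "\<And>h. h > 0 \<Longrightarrow> h < d \<Longrightarrow> dist (S h v) v < e / (CA + 1)"
    unfolding eventually_at_right_field by auto
  have key: "norm (S t v - S t' v) \<le> e" if "t \<in> {0..2*T}" "t' \<in> {0..2*T}" "t \<le> t'" "t' - t < d" for t t'
  proof (cases "t = t'")
    case True then show ?thesis using assms by simp
  next
    case False
    have "S t' v = S t (S (t' - t) v)" using Sadd[of t "t' - t" v] that by simp
    then have "S t v - S t' v = S t (v - S (t' - t) v)" by (simp add: blinfun.diff_right)
    then have "norm (S t v - S t' v) \<le> CA * norm (v - S (t' - t) v)"
      using Sbound that(1) by simp
    also have "\<dots> \<le> CA * (e / (CA + 1))"
      using d(2)[of "t' - t"] that False CA_nonneg
      by (intro mult_left_mono) (auto simp: dist_norm norm_minus_commute)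
    also have "\<dots> \<le> e" using CA_nonneg assms by (simp add: field_simps)
    finally show ?thesis .
  qed
  show ?thesis
  proof (intro exI[of _ d] conjI ballI impI)
    fix t t' assume tt: "t \<in> {0..2*T}" "t' \<in> {0..2*T}" "\<bar>t - t'\<bar> < d"
    show "norm (S t v - S t' v) \<le> e"
    proof (cases "t \<le> t'")
      case True then show ?thesis using key[OF tt(1,2)] tt(3) by simp
    next
      case False then show ?thesis using key[OF tt(2,1)] tt(3) by (simp add: norm_minus_commute)
    qed
  qed (rule d(1))
qed

lemma cont_apply:
  assumes K: "K \<subseteq> {0..2*T}" and h: "continuous_on K h"
  shows "continuous_on K (\<lambda>r. S r (h r))"
  unfolding continuous_on_iff
proof (intro ballI allI impI)
  fix r0 e :: real assume r0: "r0 \<in> K" and e: "e > 0"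
  obtain d1 where d1: "d1 > 0" "\<And>t t'. t\<in>{0..2*T} \<Longrightarrow> t'\<in>{0..2*T} \<Longrightarrow> \<bar>t - t'\<bar> < d1 \<Longrightarrow> norm (S t (h r0) - S t' (h r0)) \<le> e/2"
    using strong_unif[of "e/2" "h r0"] e by auto
  have e2: "e / (2*(CA+1)) > 0" using e CA_nonneg by simp
  obtain d2 where d2: "d2 > 0" "\<And>r. r \<in> K \<Longrightarrow> dist r r0 < d2 \<Longrightarrow> dist (h r) (h r0) < e / (2*(CA+1))"
    using h r0 e2 unfolding continuous_on_iff by metis
  show "\<exists>d>0. \<forall>r\<in>K. dist r r0 < d \<longrightarrow> dist (S r (h r)) (S r0 (h r0)) < e"
  proof (intro exI[of _ "min d1 d2"] conjI ballI impI)
    fix r assume r: "r \<in> K" "dist r r0 < min d1 d2"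
    have "S r (h r) - S r0 (h r0) = S r (h r - h r0) + (S r (h r0) - S r0 (h r0))"
      by (simp add: blinfun.diff_right)
    then have "dist (S r (h r)) (S r0 (h r0)) \<le> norm (S r (h r - h r0)) + norm (S r (h r0) - S r0 (h r0))"
      by (metis dist_norm norm_triangle_ineq)
    also have "norm (S r (h r - h r0)) \<le> CA * norm (h r - h r0)" using Sbound r K by auto
    also have "\<dots> \<le> CA * (e / (2*(CA+1)))"
      using d2(2)[OF r(1)] r(2) CA_nonneg by (intro mult_left_mono) (auto simp: dist_norm)
    also have "\<dots> < e/2" using CA_nonneg e by (simp add: field_simps)
    also have "norm (S r (h r0) - S r0 (h r0)) \<le> e/2"
      using d1(2)[of r r0] r K r0 by (auto simp: dist_real_def subset_iff)
    finally show "dist (S r (h r)) (S r0 (h r0)) < e" by simp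
  qed (use d1 d2 in auto)
qed

lemma subst_int:
  assumes w: "continuous_on UNIV w" and t: "0 \<le> t" "t \<le> 2*T"
  shows "((\<lambda>s. S (t - s) (w s)) has_integral integral {0..t} (\<lambda>r. S r (w (t - r)))) {0..t}"
proof -
  have c: "continuous_on {0..t} (\<lambda>r. S r (w (t - r)))"
    using t by (intro cont_apply continuous_on_compose2[OF w]) (auto intro!: continuous_intros)
  have i: "((\<lambda>r. S r (w (t - r))) has_integral integral {0..t} (\<lambda>r. S r (w (t - r)))) (cbox 0 t)"
    using integrable_continuous_interval[OF c] by (simp add: integrable_integral)
  have "((\<lambda>x. S ((-1) *\<^sub>R x + t) (w (t - ((-1) *\<^sub>R x + t)))) has_integral (1 / (\<bar>-1\<bar> ^ DIM(real))) *\<^sub>R integral {0..t} (\<lambda>r. S r (w (t - r))))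
     ((\<lambda>x. (1 / (-1)) *\<^sub>R x + -((1 / (-1)) *\<^sub>R t)) ` cbox 0 t)"
    by (rule has_integral_affinity[OF i]) simp
  moreover have "(\<lambda>x. (1 / (-1)) *\<^sub>R x + -((1 / (-1)) *\<^sub>R t)) ` cbox 0 t = {0..t::real}"
  proof -
    have "x \<in> (\<lambda>x. - x + t) ` {0..t}" if "x \<in> {0..t}" for x
      using that by (intro image_eqI[of _ _ "t - x"]) auto
    then show ?thesis by auto
  qed
  ultimately show ?thesis by (simp add: algebra_simps)
qed

definition conv :: "(real \<Rightarrow> 'a) \<Rightarrow> real \<Rightarrow> 'a" where
  "conv w t = integral {0..t} (\<lambda>s. S (t - s) (w s))"

lemma conv_int:
  assumes w: "continuous_on UNIV w" and t: "0 \<le> t" "t \<le> 2*T"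
  shows "(\<lambda>s. S (t - s) (w s)) integrable_on {0..t}"
  using subst_int[OF assms] by blast

lemma conv_bound:
  assumes w: "continuous_on UNIV w" and w': "continuous_on UNIV w'"
    and t0: "0 \<le> t0" "t0 \<le> T" and t: "0 \<le> t" "t \<le> T"
    and wb: "\<And>s. s \<in> {0..t} \<Longrightarrow> norm (w s - w' s) \<le> A + B * exp (\<theta> * s)"
  shows "norm (S t0 (conv w t - conv w' t)) \<le> CA * (A * t + B * qplus \<theta> t)"
proof -
  have tt: "t \<le> 2*T" using t T_pos by simp
  have d: "conv w t - conv w' t = integral {0..t} (\<lambda>s. S (t - s) (w s - w' s))"
    unfolding conv_def
    by (subst integral_diff[symmetric]) (auto intro!: conv_int w w' t tt simp: blinfun.diff_right)
  have int1: "(\<lambda>s. S (t - s) (w s - w' s)) integrable_on {0..t}"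
    by (rule conv_int) (auto intro!: continuous_intros w w' t tt)
  have "S t0 (conv w t - conv w' t) = integral {0..t} (blinfun_apply (S t0) \<circ> (\<lambda>s. S (t - s) (w s - w' s)))"
    unfolding d by (rule integral_linear[OF int1 blinfun.bounded_linear_right, symmetric])
  also have "\<dots> = integral {0..t} (\<lambda>s. S (t0 + (t - s)) (w s - w' s))"
    by (rule integral_cong) (use t0 in \<open>auto simp: Sadd\<close>)
  finally have eq: "S t0 (conv w t - conv w' t) = integral {0..t} (\<lambda>s. S (t0 + (t - s)) (w s - w' s))" .
  have int2: "(\<lambda>s. S (t0 + (t - s)) (w s - w' s)) integrable_on {0..t}"
    using integrable_linear[OF int1 blinfun.bounded_linear_right, of "S t0"]
    by (simp add: o_def) (smt (verit, best) Henstock_Kurzweil_Integration.integrable_cong Sadd atLeastAtMost_iff t0(1))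
  have gi: "((\<lambda>s. CA * (A + B * exp (\<theta> * s))) has_integral CA * (A * t + B * qplus \<theta> t)) {0..t}"
    using has_integral_mult_right[OF has_integral_add[OF has_integral_const_real[of A 0 t] has_integral_mult_right[OF exp_int[OF t(1), of \<theta>], of B]], of CA]
    using t by (simp add: content_real algebra_simps)
  have "norm (integral {0..t} (\<lambda>s. S (t0 + (t - s)) (w s - w' s))) \<le> integral {0..t} (\<lambda>s. CA * (A + B * exp (\<theta> * s)))"
  proof (rule integral_norm_bound_integral[OF int2])
    show "(\<lambda>s. CA * (A + B * exp (\<theta> * s))) integrable_on {0..t}" using gi by blast
    fix s assume s: "s \<in> {0..t}"
    have "norm (S (t0 + (t - s)) (w s - w' s)) \<le> CA * norm (w s - w' s)"
      using s t0 t by (intro Sbound) auto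
    also have "\<dots> \<le> CA * (A + B * exp (\<theta> * s))" using wb[OF s] CA_nonneg by (intro mult_left_mono)
    finally show "norm (S (t0 + (t - s)) (w s - w' s)) \<le> CA * (A + B * exp (\<theta> * s))" .
  qed
  then show ?thesis using eq integral_unique[OF gi] by (simp only:)
qed

lemma conv_cont:
  assumes w: "continuous_on UNIV w"
  shows "continuous_on {0..T} (conv w)"
proof -
  define J where "J t = integral {0..t} (\<lambda>r. S r (w (t - r)))" for t
  have cJ: "conv w t = J t" if "t \<in> {0..T}" for t
    using subst_int[OF w, of t] that T_pos unfolding conv_def J_def by (auto intro: integral_unique)
  have gc: "continuous_on {0..t} (\<lambda>r. S r (w (t' - r)))" if "t \<le> 2*T" for t t'
    using that by (intro cont_apply continuous_on_compose2[OF w]) (auto intro!: continuous_intros)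
  have uc: "uniformly_continuous_on {0..T} w"
    by (rule compact_uniformly_continuous[OF continuous_on_subset[OF w] compact_Icc]) auto
  obtain B where B: "B > 0" "\<And>s. s \<in> {0..T} \<Longrightarrow> norm (w s) \<le> B"
    using compact_imp_bounded[OF compact_continuous_image[OF continuous_on_subset[OF w] compact_Icc[of 0 T]]]
    unfolding bounded_pos by auto
  have "uniformly_continuous_on {0..T} J"
    unfolding uniformly_continuous_on_def
  proof (intro allI impI)
    fix e :: real assume e: "e > 0"
    have e1: "e / (2*(CA*T+1)) > 0" using e CA_nonneg T_pos by (intro divide_pos_pos) (auto intro: add_nonneg_pos)
    obtain \<eta> where eta: "\<eta> > 0" "\<And>x x'. x \<in> {0..T} \<Longrightarrow> x' \<in> {0..T} \<Longrightarrow> dist x' x < \<eta> \<Longrightarrow> dist (w x') (w x) < e / (2*(CA*T+1))"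
      using uc e1 unfolding uniformly_continuous_on_def by metis
    define d where "d = min \<eta> (e / (2*(CA*B+1)))"
    have d: "d > 0" using eta pos_frac[OF e, of "CA*B"] CA_nonneg B by (simp add: d_def)
    have key: "norm (J t' - J t) < e" if tt: "t \<in> {0..T}" "t' \<in> {0..T}" "t \<le> t'" "t' - t < d" for t t'
    proof -
      have int': "(\<lambda>r. S r (w (t' - r))) integrable_on {0..t'}"
        using gc[of t' t'] tt T_pos by (intro integrable_continuous_interval) auto
      have int'a: "(\<lambda>r. S r (w (t' - r))) integrable_on {0..t}"
        by (rule integrable_on_subinterval[OF int']) (use tt in auto)
      have int'b: "(\<lambda>r. S r (w (t' - r))) integrable_on {t..t'}"
        by (rule integrable_on_subinterval[OF int']) (use tt in auto)
      have inta: "(\<lambda>r. S r (w (t - r))) integrable_on {0..t}"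
        using gc[of t t] tt T_pos by (intro integrable_continuous_interval) auto
      have "J t' = integral {0..t} (\<lambda>r. S r (w (t' - r))) + integral {t..t'} (\<lambda>r. S r (w (t' - r)))"
        unfolding J_def using Henstock_Kurzweil_Integration.integral_combine[OF _ _ int', of t] tt by auto
      then have "J t' - J t = integral {0..t} (\<lambda>r. S r (w (t' - r) - w (t - r))) + integral {t..t'} (\<lambda>r. S r (w (t' - r)))"
        unfolding J_def by (simp add: integral_diff[OF int'a inta, symmetric] blinfun.diff_right)
      then have "norm (J t' - J t) \<le> norm (integral {0..t} (\<lambda>r. S r (w (t' - r) - w (t - r)))) + norm (integral {t..t'} (\<lambda>r. S r (w (t' - r))))"
        by (simp add: norm_triangle_ineq)
      also have "norm (integral {0..t} (\<lambda>r. S r (w (t' - r) - w (t - r)))) \<le> (CA * (e / (2*(CA*T+1)))) * (t - 0)"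
      proof (rule int_bound_const)
        show "(\<lambda>r. S r (w (t' - r) - w (t - r))) integrable_on {0..t}"
          using integrable_diff[OF int'a inta] by (simp add: blinfun.diff_right)
        fix r assume r: "r \<in> {0..t}"
        have "norm (S r (w (t' - r) - w (t - r))) \<le> CA * norm (w (t' - r) - w (t - r))"
          using r tt T_pos by (intro Sbound) auto
        also have "\<dots> \<le> CA * (e / (2*(CA*T+1)))"
          using eta(2)[of "t - r" "t' - r"] r tt d_def CA_nonneg
          by (intro mult_left_mono) (auto simp: dist_norm)
        finally show "norm (S r (w (t' - r) - w (t - r))) \<le> CA * (e / (2*(CA*T+1)))" .
      next
        show "0 \<le> CA * (e / (2*(CA*T+1)))" using CA_nonneg e1 by (intro mult_nonneg_nonneg) auto
      qed (use tt in auto)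
      also have "norm (integral {t..t'} (\<lambda>r. S r (w (t' - r)))) \<le> (CA * B) * (t' - t)"
      proof (rule int_bound_const[OF int'b])
        fix r assume r: "r \<in> {t..t'}"
        have "norm (S r (w (t' - r))) \<le> CA * norm (w (t' - r))"
          using r tt T_pos by (intro Sbound) auto
        also have "\<dots> \<le> CA * B" using B(2)[of "t' - r"] r tt CA_nonneg by (intro mult_left_mono) auto
        finally show "norm (S r (w (t' - r))) \<le> CA * B" .
      qed (use tt CA_nonneg B in auto)
      also have "(CA * (e / (2*(CA*T+1)))) * (t - 0) < e/2 + e/2 * 0 + 0"
      proof -
        have "CA * t \<le> CA * T" using tt CA_nonneg by (intro mult_left_mono) auto
        moreover have "0 < 2*(CA*T+1)" using CA_nonneg T_pos by (simp add: add_nonneg_pos)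
        ultimately have "CA * t / (2*(CA*T+1)) < 1/2" by (simp add: divide_less_eq)
        then have "(CA * t / (2*(CA*T+1))) * e < 1/2 * e" using e by (intro mult_strict_right_mono)
        then show ?thesis by (simp add: field_simps)
      qed
      also have "(CA * B) * (t' - t) \<le> e/2"
      proof -
        have "(CA * B) * (t' - t) \<le> (CA * B) * (e / (2*(CA*B+1)))"
          using tt d_def CA_nonneg B by (intro mult_left_mono) auto
        also have "\<dots> \<le> e/2" using CA_nonneg B e by (intro frac_le) auto
        finally show ?thesis .
      qed
      finally show ?thesis by simp
    qed
    show "\<exists>d>0. \<forall>x\<in>{0..T}. \<forall>x'\<in>{0..T}. dist x' x < d \<longrightarrow> dist (J x') (J x) < e"
    proof (intro exI[of _ d] conjI ballI impI)
      fix x x' assume xx: "x \<in> {0..T}" "x' \<in> {0..T}" "dist x' x < d"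
      show "dist (J x') (J x) < e"
      proof (cases "x \<le> x'")
        case True then show ?thesis using key[OF xx(1,2)] xx(3) by (simp add: dist_norm dist_real_def)
      next
        case False then show ?thesis using key[OF xx(2,1)] xx(3) by (simp add: dist_norm dist_real_def norm_minus_commute)
      qed
    qed (rule d)
  qed
  then have "continuous_on {0..T} J" by (rule uniformly_continuous_imp_continuous)
  then show ?thesis using cJ continuous_on_cong by blast
qed

end

lemma qplus_nonneg: "0 \<le> \<theta> \<Longrightarrow> 0 \<le> t \<Longrightarrow> 0 \<le> qplus \<theta> t"
  by (auto simp: qplus_def intro!: divide_nonneg_pos)

lemma qplus_mono: "0 \<le> \<theta> \<Longrightarrow> t \<le> T \<Longrightarrow> qplus \<theta> t \<le> qplus \<theta> T"
  by (auto simp: qplus_def intro!: divide_right_mono)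

lemma qminus_mono: "0 \<le> \<theta> \<Longrightarrow> t \<le> T \<Longrightarrow> qminus \<theta> t \<le> qminus \<theta> T"
  by (auto simp: qminus_def intro!: divide_right_mono)

lemma qplus_qminus: "exp (- \<theta> * t) * qplus \<theta> t \<le> qminus \<theta> t"
proof -
  have "exp (- \<theta> * t) * (exp (\<theta> * t) - 1) = 1 - exp (- \<theta> * t)"
    by (simp add: right_diff_distrib exp_add[symmetric])
  then show ?thesis by (auto simp: qplus_def qminus_def)
qed

locale prob = sg S T CA for S :: "real \<Rightarrow> ('a::banach \<Rightarrow>\<^sub>L 'a)" and T CA +
  fixes F G :: "'a \<Rightarrow> 'a \<Rightarrow> 'a" and a b k a11 a12 a21 a22 \<theta> :: real and \<beta> :: 'a
  assumes a_pos: "a > 0" and k_pos: "k > 0"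
    and F_cont: "continuous_on UNIV (\<lambda>(x, y). F x y)"
    and G_cont: "continuous_on UNIV (\<lambda>(x, y). G x y)"
    and a_nonneg: "a11 \<ge> 0" "a12 \<ge> 0" "a21 \<ge> 0" "a22 \<ge> 0"
    and F_lip: "\<forall>x xb y yb. norm (F x y - F xb yb) \<le> a11 * norm (x - xb) + a12 * norm (y - yb)"
    and G_lip: "\<forall>x xb y yb. norm (G x y - G xb yb) \<le> a21 * norm (x - xb) + a22 * norm (y - yb)"
    and th_nonneg: "\<theta> \<ge> 0"
begin

definition cl :: "real \<Rightarrow> real" where "cl t = max 0 (min T t)"

lemma cl_in: "cl t \<in> {0..T}" using T_pos by (auto simp: cl_def)
lemma cl_id: "t \<in> {0..T} \<Longrightarrow> cl t = t" by (auto simp: cl_def)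
lemma cl_cl[simp]: "cl (cl t) = cl t" using cl_id cl_in by blast
lemma cl_cont: "continuous_on UNIV cl" unfolding cl_def by (intro continuous_intros)

lemma clamp_bcont:
  assumes "continuous_on {0..T} g" shows "(\<lambda>t. g (cl t)) \<in> bcontfun"
proof -
  have c: "continuous_on UNIV (\<lambda>t. g (cl t))"
    by (rule continuous_on_compose2[OF assms cl_cont]) (use cl_in in auto)
  have "range (\<lambda>t. g (cl t)) \<subseteq> g ` {0..T}" using cl_in by auto
  moreover have "bounded (g ` {0..T})"
    by (intro compact_imp_bounded compact_continuous_image assms compact_Icc)
  ultimately show ?thesis using c bounded_subset unfolding bcontfun_def by blast
qed

definition wF :: "(real \<Rightarrow> 'a) \<Rightarrow> (real \<Rightarrow> 'a) \<Rightarrow> real \<Rightarrow> 'a" where "wF u v s = F (u s) (v s)"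
definition wG :: "(real \<Rightarrow> 'a) \<Rightarrow> (real \<Rightarrow> 'a) \<Rightarrow> real \<Rightarrow> 'a" where "wG u v s = G (u s) (v s)"

lemma wF_cont: "continuous_on UNIV u \<Longrightarrow> continuous_on UNIV v \<Longrightarrow> continuous_on UNIV (wF u v)"
  unfolding wF_def
  using continuous_on_compose2[OF F_cont, of UNIV "\<lambda>s. (u s, v s)"] by (auto intro!: continuous_intros)

lemma wG_cont: "continuous_on UNIV u \<Longrightarrow> continuous_on UNIV v \<Longrightarrow> continuous_on UNIV (wG u v)"
  unfolding wG_def
  using continuous_on_compose2[OF G_cont, of UNIV "\<lambda>s. (u s, v s)"] by (auto intro!: continuous_intros)

definition alpha :: "(real \<Rightarrow> 'a) \<Rightarrow> (real \<Rightarrow> 'a) \<Rightarrow> 'a" where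
  "alpha u v = (1/a) *\<^sub>R (S T (u 0) + conv (wF u v) T - k *\<^sub>R (S T \<beta> + conv (wG u v) T - b *\<^sub>R \<beta>))"

definition N1 :: "(real \<Rightarrow> 'a) \<Rightarrow> (real \<Rightarrow> 'a) \<Rightarrow> real \<Rightarrow> 'a" where
  "N1 u v t = S (cl t) (alpha u v) + conv (wF u v) (cl t)"

definition N2 :: "(real \<Rightarrow> 'a) \<Rightarrow> (real \<Rightarrow> 'a) \<Rightarrow> real \<Rightarrow> 'a" where
  "N2 u v t = S (cl t) \<beta> + conv (wG u v) (cl t)"

lemma N1_bcont: "continuous_on UNIV u \<Longrightarrow> continuous_on UNIV v \<Longrightarrow> N1 u v \<in> bcontfun"
  unfolding N1_def
  by (rule clamp_bcont[of "\<lambda>t. S t (alpha u v) + conv (wF u v) t"])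
     (intro continuous_on_add cont_apply conv_cont wF_cont continuous_on_const, use T_pos in auto)

lemma N2_bcont: "continuous_on UNIV u \<Longrightarrow> continuous_on UNIV v \<Longrightarrow> N2 u v \<in> bcontfun"
  unfolding N2_def
  by (rule clamp_bcont[of "\<lambda>t. S t \<beta> + conv (wG u v) t"])
     (intro continuous_on_add cont_apply conv_cont wG_cont continuous_on_const, use T_pos in auto)

definition "M11 = CA * (1 / a + (1 + 1 / a) * T * a11 + (k / a) * T * a21)"
definition "M12 = CA * (((1 + 1 / a) * a12 + (k / a) * a22) * qplus \<theta> T)"
definition "M21 = CA * (T * a21)"
definition "M22 = CA * (a22 * qminus \<theta> T)"

lemma step:
  assumes c: "continuous_on UNIV u" "continuous_on UNIV v" "continuous_on UNIV u'" "continuous_on UNIV v'"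
    and h: "\<forall>t\<in>{0..T}. norm (u t - u' t) \<le> Dx \<and> exp (- \<theta> * t) * norm (v t - v' t) \<le> Dy"
  shows "\<forall>t\<in>{0..T}. norm (N1 u v t - N1 u' v' t) \<le> M11 * Dx + M12 * Dy \<and>
                     exp (- \<theta> * t) * norm (N2 u v t - N2 u' v' t) \<le> M21 * Dx + M22 * Dy"
proof (intro ballI conjI)
  fix t assume t: "t \<in> {0..T}"
  have T0: "0 \<in> {0..T}" using T_pos by auto
  have Dx: "0 \<le> Dx" using h T0 by (meson norm_ge_zero order_trans)
  have Dy: "0 \<le> Dy" using h T0 by (metis mult_nonneg_nonneg exp_ge_zero norm_ge_zero order_trans)
  have vb: "norm (v s - v' s) \<le> Dy * exp (\<theta> * s)" if "s \<in> {0..T}" for s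
  proof -
    have "exp (- \<theta> * s) * norm (v s - v' s) \<le> Dy" using h that by auto
    then have "exp (\<theta> * s) * (exp (- \<theta> * s) * norm (v s - v' s)) \<le> exp (\<theta> * s) * Dy"
      by (intro mult_left_mono) auto
    then show ?thesis by (simp add: mult.assoc[symmetric] exp_add[symmetric] mult.commute)
  qed
  have Fb: "norm (wF u v s - wF u' v' s) \<le> a11 * Dx + (a12 * Dy) * exp (\<theta> * s)" if "s \<in> {0..T}" for s
  proof -
    have "norm (wF u v s - wF u' v' s) \<le> a11 * norm (u s - u' s) + a12 * norm (v s - v' s)"
      using F_lip unfolding wF_def by blast
    also have "\<dots> \<le> a11 * Dx + a12 * (Dy * exp (\<theta> * s))"
      using h that vb[OF that] a_nonneg by (intro add_mono mult_left_mono) auto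
    finally show ?thesis by (simp add: mult.assoc)
  qed
  have Gb: "norm (wG u v s - wG u' v' s) \<le> a21 * Dx + (a22 * Dy) * exp (\<theta> * s)" if "s \<in> {0..T}" for s
  proof -
    have "norm (wG u v s - wG u' v' s) \<le> a21 * norm (u s - u' s) + a22 * norm (v s - v' s)"
      using G_lip unfolding wG_def by blast
    also have "\<dots> \<le> a21 * Dx + a22 * (Dy * exp (\<theta> * s))"
      using h that vb[OF that] a_nonneg by (intro add_mono mult_left_mono) auto
    finally show ?thesis by (simp add: mult.assoc)
  qed
  have cF: "continuous_on UNIV (wF u v)" "continuous_on UNIV (wF u' v')" using c by (auto intro: wF_cont)
  have cG: "continuous_on UNIV (wG u v)" "continuous_on UNIV (wG u' v')" using c by (auto intro: wG_cont)
  have TT: "0 \<le> T" "T \<le> T" using T_pos by auto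
  have t': "0 \<le> t" "t \<le> T" using t by auto
  have bFT: "norm (S t0 (conv (wF u v) t1 - conv (wF u' v') t1)) \<le> CA * (a11 * Dx * t1 + (a12 * Dy) * qplus \<theta> t1)"
    if "0 \<le> t0" "t0 \<le> T" "0 \<le> t1" "t1 \<le> T" for t0 t1
    using conv_bound[OF cF that, of "a11 * Dx" "a12 * Dy" \<theta>] Fb that by auto
  have bGT: "norm (S t0 (conv (wG u v) t1 - conv (wG u' v') t1)) \<le> CA * (a21 * Dx * t1 + (a22 * Dy) * qplus \<theta> t1)"
    if "0 \<le> t0" "t0 \<le> T" "0 \<le> t1" "t1 \<le> T" for t0 t1
    using conv_bound[OF cG that, of "a21 * Dx" "a22 * Dy" \<theta>] Gb that by auto
  have qT: "qplus \<theta> t \<le> qplus \<theta> T" using qplus_mono th_nonneg t by auto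
  have q0: "0 \<le> qplus \<theta> t" using qplus_nonneg th_nonneg t by auto
  define P where "P = S t (S T (u 0 - u' 0))"
  define Q where "Q = S t (conv (wF u v) T - conv (wF u' v') T)"
  define R where "R = S t (conv (wG u v) T - conv (wG u' v') T)"
  have eqA: "S t (alpha u v - alpha u' v') = (1/a) *\<^sub>R (P + Q - k *\<^sub>R R)"
    unfolding alpha_def P_def Q_def R_def using t
    by (simp add: blinfun.diff_right blinfun.add_right blinfun.scaleR_right algebra_simps)
  then have "norm (S t (alpha u v - alpha u' v')) \<le> (1/a) * (norm P + norm Q + k * norm R)"
  proof -
    have "norm (P + Q - k *\<^sub>R R) \<le> norm (P + Q) + norm (k *\<^sub>R R)" by (rule norm_triangle_ineq4)
    also have "\<dots> \<le> norm P + norm Q + k * norm R" using k_pos by (simp add: norm_triangle_ineq)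
    finally show ?thesis using a_pos eqA by (simp add: divide_right_mono)
  qed
  also have "norm P \<le> CA * Dx"
  proof -
    have "norm P = norm (S (t + T) (u 0 - u' 0))" unfolding P_def using t by (simp add: Sadd)
    also have "\<dots> \<le> CA * norm (u 0 - u' 0)" using t by (intro Sbound) auto
    also have "\<dots> \<le> CA * Dx" using h T0 CA_nonneg by (intro mult_left_mono) auto
    finally show ?thesis .
  qed
  also have "norm Q \<le> CA * (a11 * Dx * T + (a12 * Dy) * qplus \<theta> T)"
    unfolding Q_def using bFT t TT by auto
  also have "norm R \<le> CA * (a21 * Dx * T + (a22 * Dy) * qplus \<theta> T)"
    unfolding R_def using bGT t TT by auto
  finally have A1: "norm (S t (alpha u v - alpha u' v')) \<le> 
     (1/a) * (CA * Dx + CA * (a11 * Dx * T + (a12 * Dy) * qplus \<theta> T) + k * (CA * (a21 * Dx * T + (a22 * Dy) * qplus \<theta> T)))"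
    using a_pos k_pos by (simp add: divide_right_mono mult_left_mono)
  have A2: "norm (conv (wF u v) t - conv (wF u' v') t) \<le> CA * (a11 * Dx * T + (a12 * Dy) * qplus \<theta> T)"
  proof -
    have "norm (conv (wF u v) t - conv (wF u' v') t) \<le> CA * (a11 * Dx * t + (a12 * Dy) * qplus \<theta> t)"
      using bFT[of 0 t] t TT by simp
    also have "\<dots> \<le> CA * (a11 * Dx * T + (a12 * Dy) * qplus \<theta> T)"
      using t qT Dx Dy a_nonneg CA_nonneg
      by (intro mult_left_mono add_mono mult_left_mono) auto
    finally show ?thesis .
  qed
  have "N1 u v t - N1 u' v' t = S t (alpha u v - alpha u' v') + (conv (wF u v) t - conv (wF u' v') t)"
    unfolding N1_def cl_id[OF t] by (simp add: blinfun.diff_right algebra_simps)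
  then have "norm (N1 u v t - N1 u' v' t) \<le> norm (S t (alpha u v - alpha u' v')) + norm (conv (wF u v) t - conv (wF u' v') t)"
    by (simp add: norm_triangle_ineq)
  also have "\<dots> \<le> (1/a) * (CA * Dx + CA * (a11 * Dx * T + (a12 * Dy) * qplus \<theta> T) + k * (CA * (a21 * Dx * T + (a22 * Dy) * qplus \<theta> T)))
       + CA * (a11 * Dx * T + (a12 * Dy) * qplus \<theta> T)" using A1 A2 by simp
  also have "\<dots> = M11 * Dx + M12 * Dy" unfolding M11_def M12_def using a_pos by (simp add: field_simps)
  finally show "norm (N1 u v t - N1 u' v' t) \<le> M11 * Dx + M12 * Dy" .
  have "N2 u v t - N2 u' v' t = conv (wG u v) t - conv (wG u' v') t"
    unfolding N2_def cl_id[OF t] by simp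
  then have "norm (N2 u v t - N2 u' v' t) \<le> CA * (a21 * Dx * t + (a22 * Dy) * qplus \<theta> t)"
    using bGT[of 0 t] t TT by simp
  then have "exp (- \<theta> * t) * norm (N2 u v t - N2 u' v' t) \<le> exp (- \<theta> * t) * (CA * (a21 * Dx * t + (a22 * Dy) * qplus \<theta> t))"
    by (intro mult_left_mono) auto
  also have "\<dots> = CA * a21 * Dx * (exp (- \<theta> * t) * t) + CA * a22 * Dy * (exp (- \<theta> * t) * qplus \<theta> t)"
    by (simp add: algebra_simps)
  also have "\<dots> \<le> CA * a21 * Dx * T + CA * a22 * Dy * qminus \<theta> T"
  proof (intro add_mono mult_left_mono)
    have "exp (- \<theta> * t) \<le> 1" using th_nonneg t by auto
    then have "exp (- \<theta> * t) * t \<le> 1 * t" using t by (intro mult_right_mono) auto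
    then show "exp (- \<theta> * t) * t \<le> T" using t by simp
    show "exp (- \<theta> * t) * qplus \<theta> t \<le> qminus \<theta> T"
      using qplus_qminus[of \<theta> t] qminus_mono[OF th_nonneg, of t T] t by simp
  qed (use CA_nonneg a_nonneg Dx Dy in auto)
  also have "\<dots> = M21 * Dx + M22 * Dy" unfolding M21_def M22_def by (simp add: algebra_simps)
  finally show "exp (- \<theta> * t) * norm (N2 u v t - N2 u' v' t) \<le> M21 * Dx + M22 * Dy" .
qed


definition Phi :: "(real \<Rightarrow>\<^sub>C 'a) \<times> (real \<Rightarrow>\<^sub>C 'a) \<Rightarrow> (real \<Rightarrow>\<^sub>C 'a) \<times> (real \<Rightarrow>\<^sub>C 'a)" where
  "Phi p = (Bcontfun (N1 (apply_bcontfun (fst p)) (apply_bcontfun (snd p))),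
            Bcontfun (N2 (apply_bcontfun (fst p)) (apply_bcontfun (snd p))))"

lemma Phi1: "apply_bcontfun (fst (Phi p)) = N1 (apply_bcontfun (fst p)) (apply_bcontfun (snd p))"
  unfolding Phi_def by (simp add: Bcontfun_inverse N1_bcont)

lemma Phi2: "apply_bcontfun (snd (Phi p)) = N2 (apply_bcontfun (fst p)) (apply_bcontfun (snd p))"
  unfolding Phi_def by (simp add: Bcontfun_inverse N2_bcont)

abbreviation "MM \<equiv> Mtheta CA T a k a11 a12 a21 a22 \<theta>"

lemma MM_simps: "MM $ 1 $ 1 = M11" "MM $ 1 $ 2 = M12" "MM $ 2 $ 1 = M21" "MM $ 2 $ 2 = M22"
  by (simp_all add: Mtheta_def M11_def M12_def M21_def M22_def)

lemma mv2: "((X::real^2^2) *v E) $ i = X $ i $ 1 * E $ 1 + X $ i $ 2 * E $ 2"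
  by (simp add: matrix_vector_mult_def UNIV_2)

lemma iter:
  assumes h: "\<forall>t\<in>{0..T}. norm (apply_bcontfun (fst p) t - apply_bcontfun (fst p') t) \<le> D $ 1 \<and>
        exp (- \<theta> * t) * norm (apply_bcontfun (snd p) t - apply_bcontfun (snd p') t) \<le> D $ 2"
  shows "\<forall>t\<in>{0..T}. norm (apply_bcontfun (fst ((Phi^^n) p)) t - apply_bcontfun (fst ((Phi^^n) p')) t) \<le> (mpow MM n *v D) $ 1 \<and>
        exp (- \<theta> * t) * norm (apply_bcontfun (snd ((Phi^^n) p)) t - apply_bcontfun (snd ((Phi^^n) p')) t) \<le> (mpow MM n *v D) $ 2"
proof (induction n)
  case 0
  then show ?case using h by simp
next
  case (Suc n)
  have e: "mpow MM (Suc n) *v D = MM *v (mpow MM n *v D)" by (simp add: matrix_vector_mul_assoc)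
  have cc: "continuous_on UNIV (apply_bcontfun f)" for f :: "real \<Rightarrow>\<^sub>C 'a" by simp
  show ?case unfolding e funpow.simps o_def Phi1 Phi2 mv2[of MM] MM_simps
    by (rule step[OF cc cc cc cc Suc])
qed

lemma N1_cl: "N1 u v t = N1 u v (cl t)" unfolding N1_def by simp
lemma N2_cl: "N2 u v t = N2 u v (cl t)" unfolding N2_def by simp

lemma contraction:
  assumes conv: "convergent_to_zero MM"
  shows "\<exists>m. \<forall>p p'. dist ((Phi^^m) p) ((Phi^^m) p') \<le> 1/2 * dist p p'"
proof -
  define e where "e = 1 / (4 * (1 + exp (\<theta> * T)))"
  have e: "e > 0" unfolding e_def by (simp add: add_pos_pos)
  have lim: "(\<lambda>n. mpow MM n $ i $ j) \<longlonglongrightarrow> 0" for i j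
    using conv unfolding convergent_to_zero_def
    by (metis (no_types) tendsto_vec_nth zero_index)
  have ev: "eventually (\<lambda>n. \<bar>mpow MM n $ i $ j\<bar> < e) sequentially" for i j
    using tendsto_iff[THEN iffD1, OF lim[of i j], rule_format, OF e] by (simp add: dist_real_def)
  have "eventually (\<lambda>n. \<bar>mpow MM n $ 1 $ 1\<bar> < e \<and> \<bar>mpow MM n $ 1 $ 2\<bar> < e \<and> \<bar>mpow MM n $ 2 $ 1\<bar> < e \<and> \<bar>mpow MM n $ 2 $ 2\<bar> < e) sequentially"
    using ev by (intro eventually_conj)
  then obtain N where N: "\<And>n. n \<ge> N \<Longrightarrow> \<bar>mpow MM n $ 1 $ 1\<bar> < e \<and> \<bar>mpow MM n $ 1 $ 2\<bar> < e \<and> \<bar>mpow MM n $ 2 $ 1\<bar> < e \<and> \<bar>mpow MM n $ 2 $ 2\<bar> < e"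
    unfolding eventually_sequentially by blast
  define m where "m = Suc N"
  have Pm: "\<bar>mpow MM m $ i $ j\<bar> < e" if "i \<in> {1,2}" "j \<in> {1,2}" for i j
    using N[of m] that unfolding m_def by auto
  show ?thesis
  proof (intro exI allI)
    fix p p' :: "(real \<Rightarrow>\<^sub>C 'a) \<times> (real \<Rightarrow>\<^sub>C 'a)"
    define d where "d = dist p p'"
    have d0: "d \<ge> 0" unfolding d_def by simp
    define D :: "real^2" where "D = vector [d, d]"
    have base: "\<forall>t\<in>{0..T}. norm (apply_bcontfun (fst p) t - apply_bcontfun (fst p') t) \<le> D $ 1 \<and>
        exp (- \<theta> * t) * norm (apply_bcontfun (snd p) t - apply_bcontfun (snd p') t) \<le> D $ 2"
    proof (intro ballI conjI)
      fix t :: real assume t: "t \<in> {0..T}"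
      have "norm (apply_bcontfun (fst p) t - apply_bcontfun (fst p') t) \<le> dist (fst p) (fst p')"
        using dist_bounded by (metis dist_norm)
      also have "\<dots> \<le> d" unfolding d_def by (rule dist_fst_le)
      finally show "norm (apply_bcontfun (fst p) t - apply_bcontfun (fst p') t) \<le> D $ 1" unfolding D_def by simp
      have "norm (apply_bcontfun (snd p) t - apply_bcontfun (snd p') t) \<le> dist (snd p) (snd p')"
        using dist_bounded by (metis dist_norm)
      also have "\<dots> \<le> d" unfolding d_def by (rule dist_snd_le)
      finally have "exp (- \<theta> * t) * norm (apply_bcontfun (snd p) t - apply_bcontfun (snd p') t) \<le> 1 * d"
        using th_nonneg t d0 by (intro mult_mono) auto
      then show "exp (- \<theta> * t) * norm (apply_bcontfun (snd p) t - apply_bcontfun (snd p') t) \<le> D $ 2" unfolding D_def by simp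
    qed
    note it = iter[OF base, of m]
    have E: "(mpow MM m *v D) $ i \<le> 2 * e * d" if "i \<in> {1,2}" for i
    proof -
      have "(mpow MM m *v D) $ i = mpow MM m $ i $ 1 * d + mpow MM m $ i $ 2 * d" unfolding mv2 D_def by simp
      also have "\<dots> \<le> e * d + e * d"
        using Pm[of i 1] Pm[of i 2] that d0 by (intro add_mono mult_right_mono) auto
      finally show ?thesis by (simp add: algebra_simps)
    qed
    define q where "q = (Phi^^N) p"
    define q' where "q' = (Phi^^N) p'"
    have mq: "(Phi^^m) p = Phi q" "(Phi^^m) p' = Phi q'" unfolding m_def q_def q'_def by simp_all
    have d1: "dist (fst ((Phi^^m) p)) (fst ((Phi^^m) p')) \<le> 2 * e * d"
    proof (rule dist_bound)
      fix t
      have "dist (apply_bcontfun (fst ((Phi^^m) p)) t) (apply_bcontfun (fst ((Phi^^m) p')) t)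
          = dist (apply_bcontfun (fst ((Phi^^m) p)) (cl t)) (apply_bcontfun (fst ((Phi^^m) p')) (cl t))"
        unfolding mq Phi1 by (metis N1_cl)
      also have "\<dots> \<le> (mpow MM m *v D) $ 1" using it cl_in by (simp add: dist_norm)
      also have "\<dots> \<le> 2 * e * d" using E by simp
      finally show "dist (apply_bcontfun (fst ((Phi^^m) p)) t) (apply_bcontfun (fst ((Phi^^m) p')) t) \<le> 2 * e * d" .
    qed
    have d2: "dist (snd ((Phi^^m) p)) (snd ((Phi^^m) p')) \<le> exp (\<theta> * T) * (2 * e * d)"
    proof (rule dist_bound)
      fix t
      let ?c = "cl t"
      have "dist (apply_bcontfun (snd ((Phi^^m) p)) t) (apply_bcontfun (snd ((Phi^^m) p')) t)
          = norm (apply_bcontfun (snd ((Phi^^m) p)) ?c - apply_bcontfun (snd ((Phi^^m) p')) ?c)"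
        unfolding mq Phi2 dist_norm by (metis N2_cl)
      also have "\<dots> = exp (\<theta> * ?c) * (exp (- \<theta> * ?c) * norm (apply_bcontfun (snd ((Phi^^m) p)) ?c - apply_bcontfun (snd ((Phi^^m) p')) ?c))"
        by (simp add: mult.assoc[symmetric] exp_add[symmetric])
      also have "\<dots> \<le> exp (\<theta> * T) * (2 * e * d)"
      proof (rule mult_mono)
        show "exp (\<theta> * ?c) \<le> exp (\<theta> * T)" using cl_in[of t] th_nonneg by (auto intro: mult_left_mono)
        show "exp (- \<theta> * ?c) * norm (apply_bcontfun (snd ((Phi^^m) p)) ?c - apply_bcontfun (snd ((Phi^^m) p')) ?c) \<le> 2 * e * d"
          using it cl_in[of t] E[of 2] by force
      qed (use e d0 in auto)
      finally show "dist (apply_bcontfun (snd ((Phi^^m) p)) t) (apply_bcontfun (snd ((Phi^^m) p')) t) \<le> exp (\<theta> * T) * (2 * e * d)" .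
    qed
    have "dist ((Phi^^m) p) ((Phi^^m) p') \<le> dist (fst ((Phi^^m) p)) (fst ((Phi^^m) p')) + dist (snd ((Phi^^m) p)) (snd ((Phi^^m) p'))"
      unfolding dist_prod_def by (intro sqrt_sum_squares_le_sum) auto
    also have "\<dots> \<le> 2 * e * d + exp (\<theta> * T) * (2 * e * d)" using d1 d2 by simp
    also have "\<dots> = 1/2 * d"
    proof -
      have "2 * e * d + exp (\<theta> * T) * (2 * e * d) = 2 * d * ((1 + exp (\<theta> * T)) * e)" by (simp add: algebra_simps)
      also have "(1 + exp (\<theta> * T)) * e = 1/4"
      proof -
        have "1 + exp (\<theta> * T) > 0" by (simp add: add_pos_pos)
        then show ?thesis unfolding e_def by simp
      qed
      finally show ?thesis by simp
    qed
    finally show "dist ((Phi^^m) p) ((Phi^^m) p') \<le> 1/2 * dist p p'" unfolding d_def .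
  qed
qed


lemma conv0[simp]: "conv w 0 = 0" by (simp add: conv_def)

lemma Phi_fix_pow: "Phi p = p \<Longrightarrow> (Phi^^n) p = p"
  by (induction n) auto

lemma conv_cong: "(\<And>s. s \<in> {0..t} \<Longrightarrow> w s = w' s) \<Longrightarrow> conv w t = conv w' t"
  unfolding conv_def by (rule integral_cong) auto

lemma main_beta:
  assumes convM: "convergent_to_zero MM"
  shows "let P = (\<lambda>x y.
              continuous_on {0..T} x \<and> continuous_on {0..T} y \<and> y 0 = \<beta> \<and>
              (\<forall>t\<in>{0..T}.
                 x t = blinfun_apply (S t) (x 0)
                       + integral {0..t} (\<lambda>s. blinfun_apply (S (t - s)) (F (x s) (y s))) \<and>
                 y t = blinfun_apply (S t) (y 0)
                       + integral {0..t} (\<lambda>s. blinfun_apply (S (t - s)) (G (x s) (y s)))) \<and>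
              x T - a *\<^sub>R x 0 = k *\<^sub>R (y T - b *\<^sub>R y 0))
          in (\<exists>x y. P x y) \<and>
             (\<forall>x y x' y'. P x y \<longrightarrow> P x' y' \<longrightarrow> (\<forall>t\<in>{0..T}. x t = x' t \<and> y t = y' t))"
    (is "let P = ?P in ?A P \<and> ?B P")
proof -
  obtain m where m: "\<forall>p p'. dist ((Phi^^m) p) ((Phi^^m) p') \<le> 1/2 * dist p p'"
    using contraction[OF convM] by blast
  have "\<exists>!p. (Phi^^m) p = p"
    by (rule banach_fix_type[of "1/2"]) (use m in simp_all)
  then obtain p0 where p0: "(Phi^^m) p0 = p0" and p0u: "\<And>p. (Phi^^m) p = p \<Longrightarrow> p = p0"
    by (metis ex1E)
  have "Phi ((Phi^^m) p0) = (Phi^^m) (Phi p0)" by (rule funpow_swap1)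
  then have "(Phi^^m) (Phi p0) = Phi p0" unfolding p0 by (rule sym)
  then have fix0: "Phi p0 = p0" by (rule p0u)
  define x where "x = apply_bcontfun (fst p0)"
  define y where "y = apply_bcontfun (snd p0)"
  have xN: "x = N1 x y" using Phi1[of p0] unfolding fix0 x_def y_def .
  have yN: "y = N2 x y" using Phi2[of p0] unfolding fix0 x_def y_def .
  have cl0: "cl 0 = 0" using T_pos by (simp add: cl_def)
  have clT: "cl T = T" using T_pos by (simp add: cl_def)
  have y0: "y 0 = \<beta>" using fun_cong[OF yN, of 0] unfolding N2_def cl0 by simp
  have x0: "x 0 = alpha x y" using fun_cong[OF xN, of 0] unfolding N1_def cl0 by simp
  have xt: "x t = S t (x 0) + conv (wF x y) t" if "t \<in> {0..T}" for t
    using fun_cong[OF xN, of t] unfolding N1_def cl_id[OF that] x0[symmetric] .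
  have yt: "y t = S t (y 0) + conv (wG x y) t" if "t \<in> {0..T}" for t
    using fun_cong[OF yN, of t] unfolding N2_def cl_id[OF that] y0 .
  have TT: "T \<in> {0..T}" using T_pos by auto
  have bd: "x T - a *\<^sub>R x 0 = k *\<^sub>R (y T - b *\<^sub>R y 0)"
  proof -
    have "a *\<^sub>R x 0 = a *\<^sub>R alpha x y" using x0 by (rule arg_cong)
    then have "a *\<^sub>R x 0 = S T (x 0) + conv (wF x y) T - k *\<^sub>R (S T \<beta> + conv (wG x y) T - b *\<^sub>R \<beta>)"
      using a_pos unfolding alpha_def by simp
    then show ?thesis using xt[OF TT] yt[OF TT] y0 by (simp add: algebra_simps)
  qed
  have A: "?P x y"
  proof -
    have cx: "continuous_on {0..T} x" unfolding x_def by simp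
    have cy: "continuous_on {0..T} y" unfolding y_def by simp
    have "\<forall>t\<in>{0..T}. x t = S t (x 0) + integral {0..t} (\<lambda>s. S (t - s) (F (x s) (y s))) \<and>
                   y t = S t (y 0) + integral {0..t} (\<lambda>s. S (t - s) (G (x s) (y s)))"
      using xt yt unfolding conv_def wF_def wG_def by blast
    then show ?thesis using cx cy y0 bd by blast
  qed
  have B: "(\<lambda>t. apply_bcontfun (fst p0) t) = (\<lambda>t. x (cl t)) \<and> (\<lambda>t. apply_bcontfun (snd p0) t) = (\<lambda>t. y (cl t))"
    if Pxy: "?P x y" for x y
  proof -
    have cx: "continuous_on {0..T} x" and cy: "continuous_on {0..T} y" and y0: "y 0 = \<beta>"
      and xt: "\<And>t. t \<in> {0..T} \<Longrightarrow> x t = S t (x 0) + conv (wF x y) t"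
      and yt: "\<And>t. t \<in> {0..T} \<Longrightarrow> y t = S t (y 0) + conv (wG x y) t"
      and bd: "x T - a *\<^sub>R x 0 = k *\<^sub>R (y T - b *\<^sub>R y 0)"
      using Pxy unfolding conv_def wF_def wG_def by blast+
    define p where "p = (Bcontfun (\<lambda>t. x (cl t)), Bcontfun (\<lambda>t. y (cl t)))"
    have p1: "apply_bcontfun (fst p) = (\<lambda>t. x (cl t))" unfolding p_def
      by (simp add: Bcontfun_inverse clamp_bcont[OF cx])
    have p2: "apply_bcontfun (snd p) = (\<lambda>t. y (cl t))" unfolding p_def
      by (simp add: Bcontfun_inverse clamp_bcont[OF cy])
    have cF: "conv (wF (\<lambda>t. x (cl t)) (\<lambda>t. y (cl t))) \<tau> = conv (wF x y) \<tau>" if "\<tau> \<in> {0..T}" for \<tau>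
      by (rule conv_cong) (use that cl_id in \<open>auto simp: wF_def\<close>)
    have cG: "conv (wG (\<lambda>t. x (cl t)) (\<lambda>t. y (cl t))) \<tau> = conv (wG x y) \<tau>" if "\<tau> \<in> {0..T}" for \<tau>
      by (rule conv_cong) (use that cl_id in \<open>auto simp: wG_def\<close>)
    have al: "alpha (\<lambda>t. x (cl t)) (\<lambda>t. y (cl t)) = x 0"
    proof -
      have "alpha (\<lambda>t. x (cl t)) (\<lambda>t. y (cl t)) = (1/a) *\<^sub>R (S T (x 0) + conv (wF x y) T - k *\<^sub>R (S T \<beta> + conv (wG x y) T - b *\<^sub>R \<beta>))"
        unfolding alpha_def cl0 cF[OF TT] cG[OF TT] ..
      also have "S T (x 0) + conv (wF x y) T - k *\<^sub>R (S T \<beta> + conv (wG x y) T - b *\<^sub>R \<beta>) = a *\<^sub>R x 0"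
        using xt[OF TT] yt[OF TT] y0 bd by (simp add: algebra_simps)
      finally show ?thesis using a_pos by simp
    qed
    have "Phi p = p"
    proof (rule prod_eqI; rule bcontfun_eqI)
      fix t
      show "apply_bcontfun (fst (Phi p)) t = apply_bcontfun (fst p) t"
        unfolding Phi1 p1 p2 N1_def al using xt[OF cl_in] cF[OF cl_in] by simp
      show "apply_bcontfun (snd (Phi p)) t = apply_bcontfun (snd p) t"
        unfolding Phi2 p1 p2 N2_def using yt[OF cl_in] cG[OF cl_in] y0 by simp
    qed
    then have "p = p0" using p0u Phi_fix_pow by blast
    then show ?thesis using p1 p2 by auto
  qed
  have "?B ?P"
  proof (intro allI impI ballI)
    fix x y x' y' t assume h: "?P x y" "?P x' y'" and t: "t \<in> {0..T}"
    have "x (cl t) = x' (cl t) \<and> y (cl t) = y' (cl t)"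
      using fun_cong[OF conjunct1[OF B[OF h(1)]], of t] fun_cong[OF conjunct1[OF B[OF h(2)]], of t]
        fun_cong[OF conjunct2[OF B[OF h(1)]], of t] fun_cong[OF conjunct2[OF B[OF h(2)]], of t] by simp
    then show "x t = x' t \<and> y t = y' t" using cl_id[OF t] by simp
  qed
  then show ?thesis using A unfolding Let_def by blast
qed

end

theorem mainTheorem3:
  fixes S :: "real \<Rightarrow> ('a::banach \<Rightarrow>\<^sub>L 'a)"
    and A :: "'a \<Rightarrow> 'a" and D :: "'a set"
    and F G :: "'a \<Rightarrow> 'a \<Rightarrow> 'a"
    and T CA a b k a11 a12 a21 a22 :: real
  assumes T_pos: "T > 0"
    and gen: "is_generator A D S"
    and CA_nonneg: "CA \<ge> 0"
    and CA_bound: "\<forall>t\<in>{0..2*T}. norm (S t) \<le> CA"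
    and a_pos: "a > 0" and b_pos: "b > 0" and k_pos: "k > 0"
    and F_cont: "continuous_on UNIV (\<lambda>(x, y). F x y)"
    and G_cont: "continuous_on UNIV (\<lambda>(x, y). G x y)"
    and a_nonneg: "a11 \<ge> 0" "a12 \<ge> 0" "a21 \<ge> 0" "a22 \<ge> 0"
    and F_lip: "\<forall>x xb y yb. norm (F x y - F xb yb) \<le> a11 * norm (x - xb) + a12 * norm (y - yb)"
    and G_lip: "\<forall>x xb y yb. norm (G x y - G xb yb) \<le> a21 * norm (x - xb) + a22 * norm (y - yb)"
    and conv: "\<exists>\<theta>\<ge>0. convergent_to_zero (Mtheta CA T a k a11 a12 a21 a22 \<theta>)"
  shows "\<forall>\<beta>. let P = (\<lambda>x y.
              continuous_on {0..T} x \<and> continuous_on {0..T} y \<and> y 0 = \<beta> \<and>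
              (\<forall>t\<in>{0..T}.
                 x t = blinfun_apply (S t) (x 0)
                       + integral {0..t} (\<lambda>s. blinfun_apply (S (t - s)) (F (x s) (y s))) \<and>
                 y t = blinfun_apply (S t) (y 0)
                       + integral {0..t} (\<lambda>s. blinfun_apply (S (t - s)) (G (x s) (y s)))) \<and>
              x T - a *\<^sub>R x 0 = k *\<^sub>R (y T - b *\<^sub>R y 0))
          in (\<exists>x y. P x y) \<and>
             (\<forall>x y x' y'. P x y \<longrightarrow> P x' y' \<longrightarrow> (\<forall>t\<in>{0..T}. x t = x' t \<and> y t = y' t))"
  proof (intro allI)
  fix \<beta>
  obtain \<theta> where th: "\<theta> \<ge> 0" and cv: "convergent_to_zero (Mtheta CA T a k a11 a12 a21 a22 \<theta>)"
    using conv by blast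
  have C0: "C0_semigroup S" using gen unfolding is_generator_def by blast
  interpret prob S T CA F G a b k a11 a12 a21 a22 \<theta> \<beta>
    by (unfold_locales) (use T_pos CA_nonneg CA_bound C0 a_pos k_pos F_cont G_cont a_nonneg F_lip G_lip th in auto)
  show "let P = (\<lambda>x y.
              continuous_on {0..T} x \<and> continuous_on {0..T} y \<and> y 0 = \<beta> \<and>
              (\<forall>t\<in>{0..T}.
                 x t = blinfun_apply (S t) (x 0)
                       + integral {0..t} (\<lambda>s. blinfun_apply (S (t - s)) (F (x s) (y s))) \<and>
                 y t = blinfun_apply (S t) (y 0)
                       + integral {0..t} (\<lambda>s. blinfun_apply (S (t - s)) (G (x s) (y s)))) \<and>
              x T - a *\<^sub>R x 0 = k *\<^sub>R (y T - b *\<^sub>R y 0))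
          in (\<exists>x y. P x y) \<and>
             (\<forall>x y x' y'. P x y \<longrightarrow> P x' y' \<longrightarrow> (\<forall>t\<in>{0..T}. x t = x' t \<and> y t = y' t))"
    by (rule main_beta[OF cv])
qed

end
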